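(* Let $X$ be a set and let $((a_{i,j})_{j\geq 1})_{i\geq 1}\in (X^{\mathbb{N}})^{\mathbb{N}}$ be a countable family of sequences in $X$. Let $(b_n)_{n\geq 1}\in X^{\mathbb{N}}$ be the output of the sequence interleaving algorithm applied to this family. Then $(b_n)$ is eventually periodic if and only if at least one of the input sequences $(a_{i,j})_{j\geq 1}$ is eventually periodic.
   Context: A finite tuple $A=(a_1,\ldots,a_n)$ is called finite-periodic with period $k$ if $k<n$, $a_{i+k}=a_i$ for $i=1,\ldots,n-k$, and $k$ is minimal with this property (for every $h<k$ there is some $i\le n-h$ with $a_i\neq a_{i+h}$); then $(a_1,\ldots,a_k)$ is called the finite-fundamental string of $A$. Let $(i_k)_{k\geq 1}=(1,2,1,2,3,1,2,3,4,1,2,3,4,5,\ldots)$; explicitly, with $T_n=n(n+1)/2$, for $T_n\le k<T_{n+1}$ one has $i_k=k-T_n+1$. The sequence interleaving algorithm produces the output as the concatenation $B_1+B_2+\cdots$ of blocks, where block $B_l$ has length $2^l$, as follows: (1) Start with $k=l=1$ and a Boolean flag $P=$ false. (2) Form $B_l$ by removing the first $2^l$ not-yet-used terms of the sequence $(a_{i_k,j})_j$ (terms used in a block are never used in a later block; each block taken from a sequence starts at its first unused term). (3) If $P=$ false: if $B_l$ is finite-periodic, set $P=$ true and let $S$ be the finite-fundamental string of $B_l$; otherwise increment $k$ by $1$. If $P=$ true: $S$ is the finite-fundamental string of some concatenation $B_h+\cdots+B_{l-1}$ with $h<l$ (the blocks produced since $P$ last became true); check whether $B_h+\cdots+B_l$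 is finite-periodic with finite-fundamental string $S$; if not, set $P=$ false and increment $k$ by $1$. (4) Increment $l$ by $1$ and return to step (2). A sequence $(c_n)$ is eventually periodic if there exist $r\ge 0$ and $m\ge 1$ with $c_{n+m}=c_n$ for all $n>r$. *)

theory Defs
  imports Main
begin

text \<open>Sequences are 1-indexed: a family is a :: nat => nat => 'x where a i j is the
 j-th term of the i-th sequence (i, j >= 1); values at index 0 are never used.\<close>

definition is_fin_period :: "'x list \<Rightarrow> nat \<Rightarrow> bool" where
  "is_fin_period A k \<longleftrightarrow> 1 \<le> k \<and> k < length A \<and> (\<forall>i. i + k < length A \<longrightarrow> A ! i = A ! (i + k))"

definition fin_periodic :: "'x list \<Rightarrow> bool" where
  "fin_periodic A \<longleftrightarrow> (\<exists>k. is_fin_period A k)"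

definition fin_period :: "'x list \<Rightarrow> nat" where
  "fin_period A = (LEAST k. is_fin_period A k)"

definition fin_fundamental :: "'x list \<Rightarrow> 'x list" where
  "fin_fundamental A = take (fin_period A) A"

definition tri :: "nat \<Rightarrow> nat" where
  "tri n = n * (n + 1) div 2"

text \<open>(i_k) = 1,2,1,2,3,1,2,3,4,... for k >= 1\<close>
definition idx :: "nat \<Rightarrow> nat" where
  "idx k = k - tri (GREATEST n. tri n \<le> k) + 1"

text \<open>Algorithm state: (k, P, S, C, used) where C is the concatenation B_h + ... + B_(l-1)
 of the blocks since P last became true, and used i is the number of already used terms
 of sequence i.\<close>
type_synonym 'x ilstate = "nat \<times> bool \<times> 'x list \<times> 'x list \<times> (nat \<Rightarrow> nat)"

definition il_block :: "(nat \<Rightarrow> nat \<Rightarrow> 'x) \<Rightarrow> 'x ilstate \<Rightarrow> nat \<Rightarrow> 'x list" where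
  "il_block a st l = (case st of (k, P, S, C, used) \<Rightarrow>
     map (\<lambda>j. a (idx k) (used (idx k) + j + 1)) [0..<2 ^ l])"

definition il_step :: "(nat \<Rightarrow> nat \<Rightarrow> 'x) \<Rightarrow> nat \<Rightarrow> 'x ilstate \<Rightarrow> 'x ilstate" where
  "il_step a l st = (case st of (k, P, S, C, used) \<Rightarrow>
     let B = il_block a st l;
         used' = used(idx k := used (idx k) + 2 ^ l)
     in if \<not> P then
          (if fin_periodic B then (k, True, fin_fundamental B, B, used')
           else (k + 1, False, S, [], used'))
        else
          (let C' = C @ B in
           if fin_periodic C' \<and> fin_fundamental C' = S then (k, True, S, C', used')
           else (k + 1, False, S, [], used')))"

text \<open>il_state a l is the state after blocks B_1,...,B_l have been produced.\<close>
primrec il_state :: "(nat \<Rightarrow> nat \<Rightarrow> 'x) \<Rightarrow> nat \<Rightarrow> 'x ilstate" where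
  "il_state a 0 = (1, False, [], [], (\<lambda>_. 0))"
| "il_state a (Suc l) = il_step a (Suc l) (il_state a l)"

definition il_blk :: "(nat \<Rightarrow> nat \<Rightarrow> 'x) \<Rightarrow> nat \<Rightarrow> 'x list" where
  "il_blk a l = il_block a (il_state a (l - 1)) l"

text \<open>Output b_n (n >= 1): the n-th term of B_1 + B_2 + ... (the first n blocks already
 have total length 2^(n+1) - 2 >= n).\<close>
definition interleave :: "(nat \<Rightarrow> nat \<Rightarrow> 'x) \<Rightarrow> nat \<Rightarrow> 'x" where
  "interleave a n = concat (map (il_blk a) [1..<n + 1]) ! (n - 1)"

definition eventually_periodic :: "(nat \<Rightarrow> 'x) \<Rightarrow> bool" where
  "eventually_periodic c \<longleftrightarrow> (\<exists>r m. m \<ge> 1 \<and> (\<forall>n > r. c (n + m) = c n))"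

end

theory Submission
  imports Defs
begin

definition kk :: "(nat \<Rightarrow> nat \<Rightarrow> 'x) \<Rightarrow> nat \<Rightarrow> nat" where "kk a l = fst (il_state a l)"
definition PP :: "(nat \<Rightarrow> nat \<Rightarrow> 'x) \<Rightarrow> nat \<Rightarrow> bool" where "PP a l = fst (snd (il_state a l))"
definition SS :: "(nat \<Rightarrow> nat \<Rightarrow> 'x) \<Rightarrow> nat \<Rightarrow> 'x list" where "SS a l = fst (snd (snd (il_state a l)))"
definition CC :: "(nat \<Rightarrow> nat \<Rightarrow> 'x) \<Rightarrow> nat \<Rightarrow> 'x list" where "CC a l = fst (snd (snd (snd (il_state a l))))"
definition UU :: "(nat \<Rightarrow> nat \<Rightarrow> 'x) \<Rightarrow> nat \<Rightarrow> nat \<Rightarrow> nat" where "UU a l = snd (snd (snd (snd (il_state a l))))"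

lemma state_eq: "il_state a l = (kk a l, PP a l, SS a l, CC a l, UU a l)"
  by (simp add: kk_def PP_def SS_def CC_def UU_def)

lemma blk_Suc: "il_blk a (Suc l) = map (\<lambda>j. a (idx (kk a l)) (UU a l (idx (kk a l)) + j + 1)) [0..<2 ^ Suc l]"
  unfolding il_blk_def il_block_def by (subst state_eq) simp

lemma state_Suc: "il_state a (Suc l) = (let B = il_blk a (Suc l); k = kk a l;
   used' = (UU a l)(idx k := UU a l (idx k) + 2 ^ Suc l) in
   if \<not> PP a l then (if fin_periodic B then (k, True, fin_fundamental B, B, used') else (k+1, False, SS a l, [], used'))
   else (let C' = CC a l @ B in if fin_periodic C' \<and> fin_fundamental C' = SS a l then (k, True, SS a l, C', used')
     else (k+1, False, SS a l, [], used')))"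
  unfolding il_blk_def
  apply (simp only: il_state.simps diff_Suc_1)
  apply (subst (1 2) state_eq)
  apply (simp add: il_step_def il_block_def Let_def)
  done

lemma st0: "kk a 0 = 1" "\<not> PP a 0" "UU a 0 = (\<lambda>_. 0)"
  by (simp_all add: kk_def PP_def UU_def)

lemma L1: "kk a (Suc l) = kk a l \<or> (kk a (Suc l) = Suc (kk a l) \<and> \<not> PP a (Suc l))"
  using state_Suc[of a l] by (auto simp: Let_def kk_def[of a "Suc l"] PP_def[of a "Suc l"] split: if_splits)

lemma L2: "kk a (Suc l) = kk a l \<Longrightarrow> PP a (Suc l)"
  using state_Suc[of a l] by (auto simp: Let_def kk_def[of a "Suc l"] PP_def[of a "Suc l"] split: if_splits)

lemma L3: "PP a l \<Longrightarrow> kk a (Suc l) = kk a l \<Longrightarrow> CC a (Suc l) = CC a l @ il_blk a (Suc l) \<and> SS a (Suc l) = SS a l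
   \<and> fin_periodic (CC a (Suc l)) \<and> fin_fundamental (CC a (Suc l)) = SS a l"
  using state_Suc[of a l] by (auto simp: Let_def kk_def[of a "Suc l"] SS_def[of a "Suc l"] CC_def[of a "Suc l"] split: if_splits)

lemma L4: "\<not> PP a l \<Longrightarrow> kk a (Suc l) = kk a l \<Longrightarrow> CC a (Suc l) = il_blk a (Suc l) \<and> fin_periodic (il_blk a (Suc l))
   \<and> SS a (Suc l) = fin_fundamental (il_blk a (Suc l))"
  using state_Suc[of a l] by (auto simp: Let_def kk_def[of a "Suc l"] SS_def[of a "Suc l"] CC_def[of a "Suc l"] split: if_splits)

lemma L5: "PP a l \<Longrightarrow> fin_periodic (CC a l @ il_blk a (Suc l)) \<Longrightarrow> fin_fundamental (CC a l @ il_blk a (Suc l)) = SS a l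
  \<Longrightarrow> kk a (Suc l) = kk a l"
  using state_Suc[of a l] by (auto simp: Let_def kk_def[of a "Suc l"] split: if_splits)

lemma L6: "\<not> PP a l \<Longrightarrow> fin_periodic (il_blk a (Suc l)) \<Longrightarrow> kk a (Suc l) = kk a l"
  using state_Suc[of a l] by (auto simp: Let_def kk_def[of a "Suc l"] split: if_splits)

lemma L7: "UU a (Suc l) = (UU a l)(idx (kk a l) := UU a l (idx (kk a l)) + 2 ^ Suc l)"
  using state_Suc[of a l] by (auto simp: Let_def UU_def[of a "Suc l"] split: if_splits)

lemma per_mult: fixes f :: "nat \<Rightarrow> 'x" and q :: nat shows "\<forall>x. f (x+m) = f x \<Longrightarrow> f (y + m*q) = f y"
proof (induction q)
  case (Suc q)
  have "f (y + m * Suc q) = f ((y + m * q) + m)" by (simp add: algebra_simps)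
  also have "\<dots> = f y" using Suc by simp
  finally show ?case .
qed simp

lemma per_mod: fixes f :: "nat \<Rightarrow> 'x" shows "\<forall>x. f (x+m) = f x \<Longrightarrow> f x = f (x mod m)"
  using per_mult[of f m "x mod m" "x div m"] by (simp add: mod_mult_div_eq)

lemma fin_period_props:
  assumes "fin_periodic A"
  shows "is_fin_period A (fin_period A)"
  using assms unfolding fin_periodic_def fin_period_def by (blast intro: LeastI)

lemma KL:
  fixes f :: "nat \<Rightarrow> 'x"
  assumes per: "\<forall>x. f (x+m) = f x" and m1: "1 \<le> m" and mN: "2*m \<le> N" and NN: "N \<le> N'"
  shows "fin_periodic (map f [0..<N']) \<and> fin_fundamental (map f [0..<N']) = fin_fundamental (map f [0..<N])"
proof -
  define B where "B = map f [0..<N]"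
  define C where "C = map f [0..<N']"
  have Bm: "is_fin_period B m" unfolding is_fin_period_def B_def using per m1 mN by auto
  hence fpB: "fin_periodic B" unfolding fin_periodic_def by blast
  define p where "p = fin_period B"
  have Bp: "is_fin_period B p" unfolding p_def by (rule fin_period_props[OF fpB])
  have pm: "p \<le> m" unfolding p_def fin_period_def using Bm by (rule Least_le)
  have p1: "1 \<le> p" using Bp unfolding is_fin_period_def by simp
  have fper: "f (x + p) = f x" for x
  proof -
    have xm: "x mod m < m" using m1 by simp
    have "f (x + p) = f ((x mod m + p) + m * (x div m))"
    proof -
      have "x + p = (x mod m + p) + m * (x div m)" using mod_mult_div_eq[of x m] by linarith
      thus ?thesis by simp
    qed
    also have "\<dots> = f (x mod m + p)" by (rule per_mult[OF per])
    also have "\<dots> = B ! (x mod m + p)" unfolding B_def using xm pm mN by simp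
    also have "\<dots> = B ! (x mod m)"
    proof -
      have "x mod m + p < N" using xm pm mN by linarith
      moreover have "length B = N" by (simp add: B_def)
      ultimately have "B ! (x mod m) = B ! (x mod m + p)" using Bp unfolding is_fin_period_def by blast
      thus ?thesis by simp
    qed
    also have "\<dots> = f (x mod m)" unfolding B_def using xm mN by simp
    also have "\<dots> = f x" by (rule per_mod[OF per, symmetric])
    finally show ?thesis .
  qed
  have pN: "p < N" using Bp unfolding is_fin_period_def B_def by simp
  have Cp: "is_fin_period C p" unfolding is_fin_period_def C_def using p1 pN NN fper by auto
  have minC: "\<not> is_fin_period C q" if "q < p" for q
  proof
    assume "is_fin_period C q"
    hence "is_fin_period B q" unfolding is_fin_period_def B_def C_def using that pN NN
      by (auto simp del: upt_Suc)
    hence "p \<le> q" unfolding p_def fin_period_def by (rule Least_le)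
    with that show False by simp
  qed
  have fpC: "fin_period C = p" unfolding fin_period_def
    by (rule Least_equality[where P="is_fin_period C", OF Cp]) (use minC le_less_linear in blast)
  have "fin_periodic C" using Cp unfolding fin_periodic_def by blast
  moreover have "fin_fundamental C = fin_fundamental B"
  proof -
    have "fin_fundamental C = take p C" by (simp add: fin_fundamental_def fpC)
    moreover have "fin_fundamental B = take p B" by (simp add: fin_fundamental_def p_def)
    moreover have "take p C = take p B" unfolding B_def C_def using pN NN by (simp add: take_map min_def)
    ultimately show ?thesis by simp
  qed
  ultimately show ?thesis unfolding B_def C_def by simp
qed

definition pre :: "(nat \<Rightarrow> nat \<Rightarrow> 'x) \<Rightarrow> nat \<Rightarrow> 'x list" where
  "pre a N = concat (map (il_blk a) [1..<N+1])"

lemma len_blk: "length (il_blk a l) = 2 ^ l"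
  unfolding il_blk_def il_block_def by (simp split: prod.splits)

lemma pre_Suc: "pre a (Suc N) = pre a N @ il_blk a (Suc N)"
  unfolding pre_def by simp

lemma len_pre: "length (pre a N) + 2 = 2 ^ (N+1)"
proof (induction N)
  case 0 then show ?case by (simp add: pre_def)
next
  case (Suc N) then show ?case by (simp add: pre_Suc len_blk)
qed

lemma pre_prefix: "x < length (pre a N) \<Longrightarrow> pre a (N+d) ! x = pre a N ! x"
proof (induction d)
  case (Suc d)
  have "x < length (pre a (N+d))"
  proof -
    have "length (pre a N) \<le> length (pre a (N+d))"
    proof -
      have "(2::nat) ^ (N+1) \<le> 2 ^ (N+d+1)" by (rule power_increasing) simp_all
      thus ?thesis using len_pre[of a N] len_pre[of a "N+d"] by linarith
    qed
    thus ?thesis using Suc by simp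
  qed
  then show ?case using Suc by (simp add: pre_Suc nth_append)
qed simp

lemma pre_nth: "x < length (pre a N) \<Longrightarrow> pre a N ! x = interleave a (x+1)"
proof -
  assume xN: "x < length (pre a N)"
  have i: "interleave a (x+1) = pre a (x+1) ! x" unfolding interleave_def pre_def by simp
  have "x + 2 < 2 ^ (x + 2)" by (rule less_exp)
  hence xx: "x < length (pre a (x+1))" using len_pre[of a "x+1"] by simp
  show ?thesis
  proof (cases "N \<le> x + 1")
    case True
    then obtain d where "x + 1 = N + d" using le_Suc_ex by blast
    then show ?thesis using i pre_prefix[OF xN, of d] by simp
  next
    case False
    then obtain d where "N = x + 1 + d" by (metis le_Suc_ex nat_le_linear)
    then show ?thesis using i pre_prefix[OF xx, of d] by simp
  qed
qed

lemma blk_out: "1 \<le> l \<Longrightarrow> j < 2 ^ l \<Longrightarrow> il_blk a l ! j = interleave a (2 ^ l - 2 + j + 1)"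
proof -
  assume l1: "1 \<le> l" and j: "j < 2 ^ l"
  then obtain l' where l: "l = Suc l'" by (cases l) auto
  have lp: "length (pre a l') = 2 ^ l - 2" using len_pre[of a l'] l by simp
  have "il_blk a l ! j = pre a l ! (length (pre a l') + j)"
    using l by (simp add: pre_Suc nth_append)
  also have "\<dots> = interleave a (length (pre a l') + j + 1)"
    by (rule pre_nth) (use l j len_blk[of a l] in \<open>simp add: pre_Suc\<close>)
  finally show ?thesis using lp by simp
qed

lemma kk_Suc_le: "kk a l \<le> kk a (Suc l)" "kk a (Suc l) \<le> Suc (kk a l)"
  using L1[of a l] by auto

lemma kk_mono: "l \<le> l' \<Longrightarrow> kk a l \<le> kk a l'"
  by (induction l' rule: dec_induct) (auto intro: le_trans kk_Suc_le)

lemma kk_le: "kk a l \<le> Suc l"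
proof (induction l)
  case 0 then show ?case by (simp add: st0)
next
  case (Suc l) then show ?case using kk_Suc_le(2)[of a l] by simp
qed

lemma UU_Suc_le: "UU a l j \<le> UU a (Suc l) j"
  by (simp add: L7)

lemma UU_mono: "l \<le> l' \<Longrightarrow> UU a l j \<le> UU a l' j"
  by (induction l' rule: dec_induct) (auto intro: le_trans UU_Suc_le)

lemma tri_Suc: "tri (Suc n) = tri n + Suc n"
proof -
  have "Suc n * (Suc n + 1) = n * (n + 1) + 2 * Suc n" by simp
  hence "tri (Suc n) = (n * (n + 1) + 2 * Suc n) div 2" unfolding tri_def by presburger
  also have "\<dots> = n * (n+1) div 2 + Suc n" by simp
  finally show ?thesis unfolding tri_def .
qed

lemma tri_mono: "m \<le> n \<Longrightarrow> tri m \<le> tri n"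
  by (induction n rule: dec_induct) (auto simp: tri_Suc)

lemma tri_ge: "n \<le> tri n"
  by (induction n) (auto simp: tri_Suc)

lemma idx_tri: "j \<le> N \<Longrightarrow> idx (tri N + j) = Suc j"
proof -
  assume jN: "j \<le> N"
  have "(GREATEST n. tri n \<le> tri N + j) = N"
  proof (rule Greatest_equality)
    fix y assume y: "tri y \<le> tri N + j"
    show "y \<le> N"
    proof (rule ccontr)
      assume "\<not> y \<le> N"
      hence "tri (Suc N) \<le> tri y" by (intro tri_mono) simp
      thus False using y jN by (simp add: tri_Suc)
    qed
  qed simp
  thus ?thesis unfolding idx_def by simp
qed

definition cc :: "nat \<Rightarrow> nat \<Rightarrow> nat" where "cc h t = 2 ^ (h+1+t) - 2 ^ (h+1)"

lemma pow_le: "(2::nat) ^ (h+1) \<le> 2 ^ (h+1+t)"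
  by (rule power_increasing) simp_all

lemma cc_0: "cc h 0 = 0" by (simp add: cc_def)

lemma cc_Suc: "cc h (Suc t) = cc h t + 2 ^ (h+1+t)"
  using pow_le[of h t] by (simp add: cc_def)

lemma cc_s: "2 ^ (h+1+t) - 2 = (2 ^ (h+1) - 2) + cc h t"
proof -
  have "(2::nat) \<le> 2 ^ (h+1)" using power_increasing[of 1 "h+1" "2::nat"] by simp
  thus ?thesis using pow_le[of h t] by (simp add: cc_def)
qed

lemma cc_1: "cc h (Suc 0) = 2 ^ (h+1)" by (simp add: cc_def)

lemma cc_mono: "cc h t < cc h (Suc t)"
  by (simp add: cc_Suc)

lemma cc_big: "t < cc h (Suc t)"
proof -
  have "h + 1 + t < 2 ^ (h+1+t)" by (rule less_exp)
  thus ?thesis by (simp add: cc_Suc)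
qed

lemma cover:
  fixes c :: "nat \<Rightarrow> nat"
  assumes c0: "c 0 = 0" and cm: "\<And>t. c t < c (Suc t)"
  shows "\<exists>t. c t \<le> x \<and> x < c (Suc t)"
proof (induction x)
  case 0 then show ?case using c0 cm[of 0] by auto
next
  case (Suc x)
  then obtain t where t: "c t \<le> x" "x < c (Suc t)" by blast
  show ?case
  proof (cases "Suc x < c (Suc t)")
    case True then show ?thesis using t by (intro exI[of _ t]) simp
  next
    case False
    hence "Suc x = c (Suc t)" using t by simp
    then show ?thesis using cm[of "Suc t"] by (intro exI[of _ "Suc t"]) simp
  qed
qed

lemma UUrun: "(\<forall>t'<t. kk a (h+t') = kk a h) \<Longrightarrow> UU a (h+t) (idx (kk a h)) = UU a h (idx (kk a h)) + cc h t"
proof (induction t)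
  case 0 then show ?case by (simp add: cc_0)
next
  case (Suc t)
  have k: "kk a (h+t) = kk a h" using Suc.prems by simp
  have "UU a (h + Suc t) (idx (kk a h)) = UU a (h+t) (idx (kk a h)) + 2 ^ Suc (h+t)"
    using L7[of a "h+t"] k by simp
  also have "\<dots> = UU a h (idx (kk a h)) + cc h t + 2 ^ (h+1+t)" using Suc by simp
  finally show ?case by (simp add: cc_Suc)
qed

lemma blk_run: "(\<forall>t'\<le>t. kk a (h+t') = kk a h) \<Longrightarrow>
  il_blk a (h+1+t) = map (\<lambda>x. a (idx (kk a h)) (UU a h (idx (kk a h)) + x + 1)) [cc h t..<cc h (Suc t)]"
proof -
  assume A: "\<forall>t'\<le>t. kk a (h+t') = kk a h"
  have k: "kk a (h+t) = kk a h" using A by simp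
  have U: "UU a (h+t) (idx (kk a h)) = UU a h (idx (kk a h)) + cc h t"
    by (rule UUrun) (use A in auto)
  have "il_blk a (h+1+t) = map (\<lambda>j. a (idx (kk a h)) (UU a (h+t) (idx (kk a h)) + j + 1)) [0..<2 ^ Suc (h+t)]"
    using blk_Suc[of a "h+t"] k by simp
  also have "\<dots> = map (\<lambda>x. a (idx (kk a h)) (UU a h (idx (kk a h)) + x + 1)) [cc h t..<cc h (Suc t)]"
    by (rule nth_equalityI) (simp_all add: U cc_Suc ac_simps)
  finally show ?thesis .
qed

lemma Stay:
  fixes f :: "nat \<Rightarrow> 'x" and a :: "nat \<Rightarrow> nat \<Rightarrow> 'x"
  assumes nP: "\<not> PP a h" and per: "\<forall>x. f (x+m) = f x" and m1: "1 \<le> m" and mh: "2*m \<le> 2 ^ (h+1)"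
    and blk: "\<And>t. (\<forall>t'\<le>t. kk a (h+t') = kk a h) \<Longrightarrow> il_blk a (h+1+t) = map f [cc h t..<cc h (Suc t)]"
  shows "kk a (h+1+t) = kk a h \<and> PP a (h+1+t) \<and> CC a (h+1+t) = map f [0..<cc h (Suc t)]
     \<and> SS a (h+1+t) = fin_fundamental (map f [0..<2 ^ (h+1)])"
proof (induction t rule: less_induct)
  case (less t)
  have allk: "\<forall>t'\<le>t. kk a (h+t') = kk a h"
  proof (intro allI impI)
    fix t' assume "t' \<le> t"
    show "kk a (h+t') = kk a h"
    proof (cases t')
      case (Suc t'')
      hence "t'' < t" using \<open>t' \<le> t\<close> by simp
      then show ?thesis using less.IH[of t''] Suc by simp
    qed simp
  qed
  have B: "il_blk a (h+1+t) = map f [cc h t..<cc h (Suc t)]" by (rule blk[OF allk])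
  show ?case
  proof (cases t)
    case 0
    have B0: "il_blk a (Suc h) = map f [0..<2 ^ (h+1)]" using B 0 by (simp add: cc_0 cc_1)
    have "fin_periodic (il_blk a (Suc h))" using KL[OF per m1 mh order_refl] B0 by simp
    hence k: "kk a (Suc h) = kk a h" by (rule L6[OF nP])
    show ?thesis using L2[OF k] L4[OF nP k] k B0 0 by (simp add: cc_1)
  next
    case (Suc t0)
    have IH: "kk a (h+1+t0) = kk a h \<and> PP a (h+1+t0) \<and> CC a (h+1+t0) = map f [0..<cc h (Suc t0)]
     \<and> SS a (h+1+t0) = fin_fundamental (map f [0..<2 ^ (h+1)])" using less.IH[of t0] Suc by simp
    define l where "l = h+1+t0"
    have lt: "Suc l = h+1+t" using Suc l_def by simp
    have CB: "CC a l @ il_blk a (Suc l) = map f [0..<cc h (Suc t)]"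
    proof -
      have "CC a l @ il_blk a (Suc l) = map f [0..<cc h t] @ map f [cc h t..<cc h (Suc t)]"
        using IH B lt Suc l_def by simp
      also have "\<dots> = map f [0..<cc h (Suc t)]"
      proof -
        have "[0..<cc h (Suc t)] = [0..<cc h t] @ [cc h t..<cc h (Suc t)]"
          using upt_add_eq_append[of 0 "cc h t" "2 ^ (h+1+t)"] by (simp add: cc_Suc)
        thus ?thesis by simp
      qed
      finally show ?thesis .
    qed
    have big: "2 ^ (h+1) \<le> cc h (Suc t)" using pow_le[of h t] unfolding cc_Suc by linarith
    have K: "fin_periodic (map f [0..<cc h (Suc t)]) \<and> fin_fundamental (map f [0..<cc h (Suc t)]) = fin_fundamental (map f [0..<2 ^ (h+1)])"
      by (rule KL[OF per m1 mh big])
    have Pl: "PP a l" using IH l_def by simp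
    have k: "kk a (Suc l) = kk a l"
      by (rule L5[OF Pl]) (use CB K IH l_def in simp_all)
    show ?thesis using L2[OF k] L3[OF Pl k] k CB IH l_def lt Suc by simp
  qed
qed

lemma Const:
  assumes nP: "\<not> PP a h" and kc: "\<forall>t. kk a (h+1+t) = kk a h"
  defines "g \<equiv> \<lambda>x. a (idx (kk a h)) (UU a h (idx (kk a h)) + x + 1)"
  shows "\<exists>p\<ge>1. \<forall>x. g (x+p) = g x" and "\<forall>x. interleave a (2 ^ (h+1) - 2 + x + 1) = g x"
proof -
  have allk: "\<forall>t'\<le>t. kk a (h+t') = kk a h" for t
  proof (intro allI impI)
    fix t' show "kk a (h+t') = kk a h" using kc[rule_format, of "t' - 1"] by (cases t') simp_all
  qed
  have B: "il_blk a (h+1+t) = map g [cc h t..<cc h (Suc t)]" for t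
    unfolding g_def by (rule blk_run[OF allk])
  have inv: "CC a (h+1+t) = map g [0..<cc h (Suc t)] \<and> fin_periodic (CC a (h+1+t))
     \<and> fin_fundamental (CC a (h+1+t)) = SS a (h+1) \<and> SS a (h+1+t) = SS a (h+1)" for t
  proof (induction t)
    case 0
    have k: "kk a (Suc h) = kk a h" using kc[rule_format, of 0] by simp
    show ?case using L4[OF nP k] B[of 0] by (simp add: cc_0)
  next
    case (Suc t)
    define l where "l = h+1+t"
    have k: "kk a (Suc l) = kk a l" using kc[rule_format, of t] kc[rule_format, of "Suc t"] allk[of t] l_def by simp
    have Pl: "PP a l"
    proof -
      have "kk a (Suc (h+t)) = kk a (h+t)" using allk[of t] kc[rule_format, of t] by simp
      thus ?thesis using L2 l_def by simp
    qed
    have app: "map g [0..<cc h (Suc t)] @ map g [cc h (Suc t)..<cc h (Suc (Suc t))] = map g [0..<cc h (Suc (Suc t))]"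
    proof -
      have "[0..<cc h (Suc (Suc t))] = [0..<cc h (Suc t)] @ [cc h (Suc t)..<cc h (Suc (Suc t))]"
        using upt_add_eq_append[of 0 "cc h (Suc t)" "2 ^ (h+1+Suc t)"] by (simp add: cc_Suc[of h "Suc t"])
      thus ?thesis by simp
    qed
    have eq: "h + 1 + Suc t = Suc l" using l_def by simp
    have H: "CC a (Suc l) = CC a l @ il_blk a (Suc l) \<and> SS a (Suc l) = SS a l
       \<and> fin_periodic (CC a (Suc l)) \<and> fin_fundamental (CC a (Suc l)) = SS a l" by (rule L3[OF Pl k])
    have SSl: "SS a l = SS a (h+1)" using Suc l_def by simp
    have c1: "CC a (Suc l) = map g [0..<cc h (Suc (Suc t))]"
      using H Suc B[of "Suc t"] app l_def eq by simp
    have f1: "fin_periodic (CC a (Suc l))" using H by blast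
    have f2: "fin_fundamental (CC a (Suc l)) = SS a (h+1)" using H SSl by metis
    have f3: "SS a (Suc l) = SS a (h+1)" using H SSl by metis
    show ?case unfolding eq using c1 f1 f2 f3 by simp
  qed
  have gx: "g x = interleave a (2 ^ (h+1) - 2 + x + 1)" for x
  proof -
    obtain t where t: "cc h t \<le> x" "x < cc h (Suc t)" using cover[of "cc h", OF cc_0 cc_mono] by blast
    define j where "j = x - cc h t"
    have j: "j < 2 ^ (h+1+t)" using t unfolding j_def cc_Suc by simp
    have "g x = il_blk a (h+1+t) ! j" using B[of t] t j unfolding j_def by (simp add: cc_Suc)
    also have "\<dots> = interleave a (2 ^ (h+1+t) - 2 + j + 1)" by (rule blk_out) (use j in simp_all)
    also have "\<dots> = interleave a (2 ^ (h+1) - 2 + x + 1)"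
    proof -
      have "(2::nat) \<le> 2 ^ (h+1)" using power_increasing[of 1 "h+1" "2::nat"] by simp
      hence "2 ^ (h+1+t) - 2 + j + 1 = 2 ^ (h+1) - 2 + x + 1" using t unfolding j_def cc_s by linarith
      thus ?thesis by simp
    qed
    finally show ?thesis .
  qed
  thus "\<forall>x. interleave a (2 ^ (h+1) - 2 + x + 1) = g x" by simp
  define p where "p = length (SS a (h+1))"
  have per: "g (x + p) = g x" and p1: "1 \<le> p" for x
  proof -
    define t where "t = x + p"
    define C where "C = CC a (h+1+t)"
    have fpC: "fin_periodic C" and ffC: "fin_fundamental C = SS a (h+1)" and CC: "C = map g [0..<cc h (Suc t)]"
      using inv[of t] unfolding C_def by blast+
    have ip: "is_fin_period C (fin_period C)" by (rule fin_period_props[OF fpC])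
    have "length (SS a (h+1)) = fin_period C"
      using ip unfolding ffC[symmetric] fin_fundamental_def is_fin_period_def by simp
    hence pp: "fin_period C = p" unfolding p_def by simp
    have lc: "length C = cc h (Suc t)" using CC by simp
    have "x + p < length C" using cc_big[of t h] lc unfolding t_def by simp
    hence "C ! x = C ! (x + p)" using ip pp unfolding is_fin_period_def by simp
    thus "g (x + p) = g x" using CC \<open>x + p < length C\<close> lc by simp
    show "1 \<le> p" using ip pp unfolding is_fin_period_def by simp
  qed
  show "\<exists>p\<ge>1. \<forall>x. g (x+p) = g x" using per p1 by blast
qed

lemma lastF:
  assumes L: "\<forall>l\<ge>L. kk a l = kk a L"
  shows "\<exists>h. \<not> PP a h \<and> (\<forall>t. kk a (h+1+t) = kk a h)"
proof -
  have allP: "\<forall>l>L. PP a l"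
  proof (intro allI impI)
    fix l assume "L < l"
    then obtain l' where l': "l = Suc l'" "L \<le> l'" by (cases l) auto
    have "kk a (Suc l') = kk a l'" using L[rule_format, of "Suc l'"] L[rule_format, of l'] l' by simp
    thus "PP a l" using L2 l' by simp
  qed
  have gen: "(\<forall>l>M. PP a l) \<Longrightarrow> \<exists>h. \<not> PP a h \<and> (\<forall>l>h. PP a l)" for M
  proof (induction M)
    case 0 then show ?case using st0(2) by blast
  next
    case (Suc M)
    show ?case
    proof (cases "PP a (Suc M)")
      case True
      have "\<forall>l>M. PP a l"
      proof (intro allI impI)
        fix l assume "M < l"
        thus "PP a l" using Suc.prems True by (cases "l = Suc M") auto
      qed
      then show ?thesis by (rule Suc.IH)
    next
      case False then show ?thesis using Suc.prems by blast
    qed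
  qed
  obtain h where h: "\<not> PP a h" "\<forall>l>h. PP a l" using gen[OF allP] by blast
  have "kk a (h+1+t) = kk a h" for t
  proof (induction t)
    case 0
    have "PP a (Suc h)" using h by simp
    then show ?case using L1[of a h] by auto
  next
    case (Suc t)
    have "PP a (Suc (h+1+t))" using h by simp
    then show ?case using L1[of a "h+1+t"] Suc by auto
  qed
  thus ?thesis using h by blast
qed

lemma hit:
  assumes nEC: "\<not> (\<exists>L. \<forall>l\<ge>L. kk a l = kk a L)" and K1: "1 \<le> K"
  shows "\<exists>L. kk a L = K \<and> \<not> PP a L"
proof -
  have unb: "\<exists>l. n \<le> kk a l" for n
  proof (induction n)
    case 0 then show ?case by simp
  next
    case (Suc n)
    then obtain l where l: "n \<le> kk a l" by blast
    from nEC obtain l' where "l' \<ge> l" "kk a l' \<noteq> kk a l" by blast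
    moreover have "kk a l \<le> kk a l'" using kk_mono \<open>l' \<ge> l\<close> by blast
    ultimately show ?case using l by (intro exI[of _ l']) simp
  qed
  define L where "L = (LEAST l. K \<le> kk a l)"
  have KL: "K \<le> kk a L" unfolding L_def using unb[of K] by (rule LeastI_ex)
  show ?thesis
  proof (cases L)
    case 0
    then show ?thesis using KL K1 by (intro exI[of _ 0]) (simp add: st0)
  next
    case (Suc L')
    have "L' < L" using Suc by simp
    hence "\<not> K \<le> kk a L'" unfolding L_def by (rule not_less_Least)
    hence lt: "kk a L' < K" by simp
    have "kk a (Suc L') = K" using KL Suc lt kk_Suc_le(2)[of a L'] by simp
    moreover have "kk a (Suc L') \<noteq> kk a L'" using calculation lt by simp
    ultimately show ?thesis using L1[of a L'] by (intro exI[of _ "Suc L'"]) auto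
  qed
qed

lemma visits:
  assumes nEC: "\<not> (\<exists>L. \<forall>l\<ge>L. kk a l = kk a L)" and i1: "1 \<le> i"
  shows "\<exists>L. idx (kk a L) = i \<and> \<not> PP a L \<and> n \<le> UU a L i \<and> n \<le> L"
proof (induction n)
  case 0
  have id: "idx (tri i + (i - 1)) = i" using idx_tri[of "i-1" i] i1 by simp
  have "1 \<le> tri i + (i - 1)" using tri_ge[of i] i1 by simp
  then obtain L where "kk a L = tri i + (i - 1)" "\<not> PP a L" using hit[OF nEC] by blast
  then show ?case using id by (intro exI[of _ L]) simp
next
  case (Suc n)
  then obtain L where L: "idx (kk a L) = i" "\<not> PP a L" "n \<le> UU a L i" "n \<le> L" by blast
  define N where "N = L + i + 2"
  define K where "K = tri N + (i - 1)"
  have idK: "idx K = i" unfolding K_def using idx_tri[of "i-1" N] i1 N_def by simp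
  have "N \<le> tri N" by (rule tri_ge)
  hence Kg: "kk a L < K" using kk_le[of a L] unfolding K_def N_def by simp
  then obtain L' where L': "kk a L' = K" "\<not> PP a L'" using hit[OF nEC, of K] by auto
  have LL: "Suc L \<le> L'"
  proof (rule ccontr)
    assume "\<not> Suc L \<le> L'"
    hence "L' \<le> L" by simp
    hence "kk a L' \<le> kk a L" by (rule kk_mono)
    thus False using Kg L' by simp
  qed
  have "UU a (Suc L) i = UU a L i + 2 ^ Suc L" using L7[of a L] L by simp
  moreover have "UU a (Suc L) i \<le> UU a L' i" using UU_mono[OF LL] by blast
  moreover have "(0::nat) < 2 ^ Suc L" by simp
  ultimately have "Suc n \<le> UU a L' i" using L by linarith
  then show ?case using L' idK LL L by (intro exI[of _ L']) simp
qed

lemma EC_of_stay: "(\<forall>t. kk a (h+1+t) = kk a h) \<Longrightarrow> \<exists>L. \<forall>l\<ge>L. kk a l = kk a L"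
proof -
  assume A: "\<forall>t. kk a (h+1+t) = kk a h"
  have "\<forall>l\<ge>h. kk a l = kk a h"
  proof (intro allI impI)
    fix l assume "h \<le> l"
    then obtain d where d: "l = h + d" using le_Suc_ex by blast
    show "kk a l = kk a h" using A[rule_format, of "d - 1"] d by (cases d) simp_all
  qed
  thus ?thesis by blast
qed

theorem theorem1:
  fixes a :: "nat \<Rightarrow> nat \<Rightarrow> 'x"
  shows "eventually_periodic (interleave a) \<longleftrightarrow> (\<exists>i\<ge>1. eventually_periodic (a i))"
proof
  assume "eventually_periodic (interleave a)"
  then obtain r m where m1: "m \<ge> 1" and per: "\<forall>n>r. interleave a (n+m) = interleave a n"
    unfolding eventually_periodic_def by blast
  have EC: "\<exists>L. \<forall>l\<ge>L. kk a l = kk a L"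
  proof (rule ccontr)
    assume nEC: "\<not> (\<exists>L. \<forall>l\<ge>L. kk a l = kk a L)"
    define H where "H = 2*m + r + 2"
    obtain h where kh: "kk a h = Suc H" and nP: "\<not> PP a h" using hit[OF nEC, of "Suc H"] by auto
    have hH: "H \<le> h" using kk_le[of a h] kh by simp
    have big: "h + 1 < 2 ^ (h+1)" by (rule less_exp)
    define f where "f x = interleave a (2 ^ (h+1) - 2 + x + 1)" for x
    have fper: "\<forall>x. f (x+m) = f x"
    proof
      fix x
      have "r < 2 ^ (h+1) - 2 + x + 1" using big hH H_def by linarith
      hence "interleave a (2 ^ (h+1) - 2 + x + 1 + m) = interleave a (2 ^ (h+1) - 2 + x + 1)"
        using per by blast
      moreover have "2 ^ (h+1) - 2 + (x + m) + 1 = 2 ^ (h+1) - 2 + x + 1 + m" by linarith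
      ultimately show "f (x+m) = f x" unfolding f_def by simp
    qed
    have mh: "2*m \<le> 2 ^ (h+1)" using big hH H_def by linarith
    have blk: "il_blk a (h+1+t) = map f [cc h t..<cc h (Suc t)]" for t
    proof (rule nth_equalityI)
      show "length (il_blk a (h+1+t)) = length (map f [cc h t..<cc h (Suc t)])"
        by (simp add: len_blk cc_Suc)
      fix j assume "j < length (il_blk a (h+1+t))"
      hence j: "j < 2 ^ (h+1+t)" by (simp add: len_blk)
      have "il_blk a (h+1+t) ! j = interleave a (2 ^ (h+1+t) - 2 + j + 1)"
        by (rule blk_out) (use j in simp_all)
      also have "\<dots> = f (cc h t + j)"
      proof -
        have "(2::nat) \<le> 2 ^ (h+1)" using power_increasing[of 1 "h+1" "2::nat"] by simp
        hence "2 ^ (h+1+t) - 2 + j + 1 = 2 ^ (h+1) - 2 + (cc h t + j) + 1" unfolding cc_s by linarith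
        thus ?thesis unfolding f_def by simp
      qed
      also have "\<dots> = map f [cc h t..<cc h (Suc t)] ! j" using j by (simp add: cc_Suc)
      finally show "il_blk a (h+1+t) ! j = map f [cc h t..<cc h (Suc t)] ! j" .
    qed
    have "kk a (h+1+t) = kk a h" for t
      using Stay[of a h f m, OF nP fper m1 mh blk] by blast
    hence "\<exists>L. \<forall>l\<ge>L. kk a l = kk a L" using EC_of_stay by blast
    with nEC show False by blast
  qed
  obtain h where nP: "\<not> PP a h" and kc: "\<forall>t. kk a (h+1+t) = kk a h" using lastF EC by blast
  define i where "i = idx (kk a h)"
  obtain p where p1: "p \<ge> 1" and gp: "\<forall>x. a i (UU a h i + (x+p) + 1) = a i (UU a h i + x + 1)"
    using Const(1)[OF nP kc] unfolding i_def by blast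
  have "eventually_periodic (a i)"
    unfolding eventually_periodic_def
  proof (intro exI conjI allI impI)
    show "1 \<le> p" by (rule p1)
    fix n :: nat assume "UU a h i < n"
    define x where "x = n - UU a h i - 1"
    have x: "n = UU a h i + x + 1" using \<open>UU a h i < n\<close> unfolding x_def by linarith
    show "a i (n + p) = a i n" using gp[rule_format, of x] x by (simp add: ac_simps)
  qed
  moreover have "i \<ge> 1" unfolding i_def idx_def by simp
  ultimately show "\<exists>i\<ge>1. eventually_periodic (a i)" by blast
next
  assume "\<exists>i\<ge>1. eventually_periodic (a i)"
  then obtain i r m where i1: "i \<ge> 1" and m1: "m \<ge> 1" and per: "\<forall>n>r. a i (n+m) = a i n"
    unfolding eventually_periodic_def by blast
  have EC: "\<exists>L. \<forall>l\<ge>L. kk a l = kk a L"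
  proof (rule ccontr)
    assume nEC: "\<not> (\<exists>L. \<forall>l\<ge>L. kk a l = kk a L)"
    obtain L where L: "idx (kk a L) = i" "\<not> PP a L" "r + 2*m \<le> UU a L i" "r + 2*m \<le> L"
      using visits[OF nEC i1, of "r + 2*m"] by blast
    define g where "g x = a i (UU a L i + x + 1)" for x
    have gper: "\<forall>x. g (x+m) = g x"
    proof
      fix x
      have "r < UU a L i + x + 1" using L by linarith
      hence "a i (UU a L i + x + 1 + m) = a i (UU a L i + x + 1)" using per by blast
      thus "g (x+m) = g x" unfolding g_def by (simp add: ac_simps)
    qed
    have "L < 2 ^ L" by (rule less_exp)
    moreover have "(2::nat) ^ L \<le> 2 ^ (L+1)" by (rule power_increasing) simp_all
    ultimately have mh: "2*m \<le> 2 ^ (L+1)" using L by linarith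
    have blk: "il_blk a (L+1+t) = map g [cc L t..<cc L (Suc t)]" if "\<forall>t'\<le>t. kk a (L+t') = kk a L" for t
      using blk_run[OF that] L(1) unfolding g_def by simp
    have "kk a (L+1+t) = kk a L" for t
      using Stay[of a L g m, OF L(2) gper m1 mh blk] by blast
    hence "\<exists>L. \<forall>l\<ge>L. kk a l = kk a L" using EC_of_stay by blast
    with nEC show False by blast
  qed
  obtain h where nP: "\<not> PP a h" and kc: "\<forall>t. kk a (h+1+t) = kk a h" using lastF EC by blast
  define g where "g x = a (idx (kk a h)) (UU a h (idx (kk a h)) + x + 1)" for x
  obtain p where p1: "p \<ge> 1" and gp: "\<forall>x. g (x+p) = g x"
    using Const(1)[OF nP kc] unfolding g_def by blast
  have out: "\<forall>x. interleave a (2 ^ (h+1) - 2 + x + 1) = g x"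
    using Const(2)[OF nP kc] unfolding g_def by blast
  show "eventually_periodic (interleave a)"
    unfolding eventually_periodic_def
  proof (intro exI conjI allI impI)
    show "1 \<le> p" by (rule p1)
    fix n :: nat assume "2 ^ (h+1) - 2 < n"
    define x where "x = n - (2 ^ (h+1) - 2) - 1"
    have x: "n = 2 ^ (h+1) - 2 + x + 1" using \<open>2 ^ (h+1) - 2 < n\<close> unfolding x_def by linarith
    have np: "n + p = 2 ^ (h+1) - 2 + (x + p) + 1" using x by linarith
    have "interleave a (n + p) = g (x + p)" unfolding np using out by blast
    also have "\<dots> = g x" using gp by blast
    also have "\<dots> = interleave a n" unfolding x using out by metis
    finally show "interleave a (n + p) = interleave a n" .
  qed
qed

end
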